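(* Let $\Psi$ be an increasing function on $(0,\infty)$ and $\sigma$ a monotone function on $(0,\infty)$ with $\sigma(y)\nearrow\infty$, satisfying $\sigma(x)\le\frac{1}{2e}\Psi\!\left(\frac{x}{2e}\right)$ for all $x>0$. Let $F$ be an entire function with $|F(x+iy)|\le e^{|y|\sigma(|y|)}$ for all $x+iy\in\mathbb{C}$. If $0<a<b$ and $F$ has $n\ge (b-a)\Psi(b-a)$ zeros on $(a,b)$, then $$\int_a^b\frac{\log|F(x)|}{x^2}\,dx\le -(\log 2)\left(\frac{b-a}{b}\right)^2\Psi(b-a).$$ *)

theory Defs
  imports "HOL-Complex_Analysis.Complex_Analysis"
begin

definition real_zero_count :: "(complex \<Rightarrow> complex) \<Rightarrow> real \<Rightarrow> real \<Rightarrow> nat" where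
  "real_zero_count F a b =
     (\<Sum>x\<in>{x. a < x \<and> x < b \<and> F (complex_of_real x) = 0}. nat (zorder F (complex_of_real x)))"

end

theory Submission
  imports Defs
begin

lemma factor_one:
  fixes F :: "complex \<Rightarrow> complex"
  assumes hol: "F holomorphic_on UNIV" and nz: "\<exists>z. F z \<noteq> 0"
  shows "\<exists>G. G holomorphic_on UNIV \<and> (\<forall>w. F w = (w - c) ^ nat (zorder F c) * G w) \<and> G c \<noteq> 0"
proof -
  define m where "m = nat (zorder F c)"
  define g where "g = zor_poly F c"
  from nz obtain z0 where z0: "F z0 \<noteq> 0" by blast
  have "\<exists>r. r>0 \<and> cball c r \<subseteq> UNIV \<and> g holomorphic_on cball c r
    \<and> (\<forall>w\<in>cball c r. F w  = g w * (w-c) ^ m  \<and> g w \<noteq>0)"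
    using zorder_exist_zero[of F UNIV c] hol z0 unfolding m_def g_def by auto
  then obtain r where r: "r > 0" "g holomorphic_on cball c r"
     "\<And>w. w \<in> cball c r \<Longrightarrow> F w = g w * (w-c) ^ m \<and> g w \<noteq> 0" by blast
  define G where "G w = (if w = c then g c else F w / (w - c) ^ m)" for w
  have eq: "F w = (w - c) ^ m * G w" for w
    using r(3)[of c] r(1) by (cases "w = c") (auto simp: G_def)
  have h1: "G holomorphic_on ball c r"
  proof -
    have "g holomorphic_on ball c r" using r(2) by (rule holomorphic_on_subset) auto
    moreover have "g w = G w" if "w \<in> ball c r" for w
      using r(3)[of w] that by (auto simp: G_def)
    ultimately show ?thesis by (rule holomorphic_transform)
  qed
  have h2: "G holomorphic_on (UNIV - {c})"
  proof -
    have "(\<lambda>w. F w / (w - c) ^ m) holomorphic_on (UNIV - {c})"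
      by (intro holomorphic_intros holomorphic_on_subset[OF hol]) auto
    moreover have "F w / (w - c) ^ m = G w" if "w \<in> UNIV - {c}" for w
      using that by (auto simp: G_def)
    ultimately show ?thesis by (rule holomorphic_transform)
  qed
  have "G holomorphic_on (ball c r \<union> (UNIV - {c}))"
    by (rule holomorphic_on_Un[OF h1 h2]) auto
  moreover have "ball c r \<union> (UNIV - {c}) = UNIV" using r(1) by auto
  ultimately have "G holomorphic_on UNIV" by simp
  moreover have "G c \<noteq> 0" using r(3)[of c] r(1) by (simp add: G_def)
  ultimately show ?thesis using eq unfolding m_def by blast
qed

lemma entire_analytic: "G holomorphic_on UNIV \<Longrightarrow> G analytic_on S"
  using analytic_on_holomorphic by blast

lemma factor_finite:
  fixes F :: "complex \<Rightarrow> complex"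
  assumes "finite Z" "F holomorphic_on UNIV" "\<exists>z. F z \<noteq> 0"
  shows "\<exists>G. G holomorphic_on UNIV \<and> (\<forall>w. F w = (\<Prod>c\<in>Z. (w - c) ^ nat (zorder F c)) * G w)
             \<and> (\<forall>c\<in>Z. G c \<noteq> 0)"
  using assms
proof (induction Z arbitrary: F rule: finite_induct)
  case empty
  then show ?case by auto
next
  case (insert c Z)
  define m where "m = nat (zorder F c)"
  obtain G1 where G1: "G1 holomorphic_on UNIV" "\<And>w. F w = (w - c) ^ m * G1 w" "G1 c \<noteq> 0"
    using factor_one[OF insert.prems] unfolding m_def by blast
  from insert.prems(2) obtain z0 where z0: "F z0 \<noteq> 0" by blast
  have "G1 z0 \<noteq> 0" using z0 G1(2)[of z0] by auto
  then obtain G where G: "G holomorphic_on UNIV"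
     "\<And>w. G1 w = (\<Prod>d\<in>Z. (w - d) ^ nat (zorder G1 d)) * G w" "\<And>d. d \<in> Z \<Longrightarrow> G d \<noteq> 0"
    using insert.IH[OF G1(1)] by blast
  have zo: "zorder F d = zorder G1 d" if "d \<in> Z" for d
  proof -
    have dc: "d \<noteq> c" using that insert.hyps by auto
    have Feq: "F = (\<lambda>w. (w - c) ^ m * G1 w)" using G1(2) by auto
    have ev: "\<forall>\<^sub>F w in at d. F w \<noteq> 0 \<and> w \<in> UNIV"
      by (rule non_zero_neighbour_alt[OF insert.prems(1) _ _ _ _ z0]) auto
    have "zorder (\<lambda>w. (w - c) ^ m * G1 w) d = zorder (\<lambda>w. (w - c) ^ m) d + zorder G1 d"
      by (rule zorder_times_analytic) (use ev Feq G1(1) in \<open>auto intro!: entire_analytic analytic_intros holomorphic_intros elim: eventually_mono\<close>)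
    moreover have "zorder (\<lambda>w. (w - c) ^ m) d = 0"
      by (rule zorder_eq_0I) (use dc in \<open>auto intro!: analytic_intros\<close>)
    ultimately show ?thesis using Feq by simp
  qed
  have "F w = (\<Prod>d\<in>insert c Z. (w - d) ^ nat (zorder F d)) * G w" for w
  proof -
    have "F w = (w - c) ^ m * ((\<Prod>d\<in>Z. (w - d) ^ nat (zorder G1 d)) * G w)" using G1(2) G(2) by simp
    also have "(\<Prod>d\<in>Z. (w - d) ^ nat (zorder G1 d)) = (\<Prod>d\<in>Z. (w - d) ^ nat (zorder F d))"
      using zo by (intro prod.cong) auto
    finally show ?thesis using insert.hyps unfolding m_def by (simp add: mult.assoc)
  qed
  moreover have "G c \<noteq> 0" using G1(3) G(2)[of c] by auto
  ultimately show ?case using G(1,3) by blast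
qed

lemma ln_sq_abs: "ln (u^2) = 2 * ln \<bar>u::real\<bar>"
proof (cases "u = 0")
  case False
  have "ln (u^2) = ln (\<bar>u\<bar>^2)" by simp
  also have "\<dots> = 2 * ln \<bar>u\<bar>" using False by (subst ln_realpow) auto
  finally show ?thesis .
qed simp

lemma ln_lower: assumes "0 < (x::real)" shows "ln x \<ge> -2 / sqrt x"
proof -
  define s where "s = sqrt x"
  have s: "s > 0" using assms by (simp add: s_def)
  have "ln (1/s) \<le> 1/s - 1" using s by (intro ln_le_minus_one) auto
  moreover have "ln (1/s) = - ln s" using s by (simp add: ln_div)
  ultimately have "- ln s \<le> 1/s - 1" by simp
  moreover have "ln x = 2 * ln s"
  proof -
    have "x = s^2" unfolding s_def using assms by simp
    thus ?thesis using s by (simp add: ln_realpow)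
  qed
  moreover have "-2 / sqrt x = 2 * (- (1/s))" unfolding s_def by simp
  moreover have "1/s > 0" using s by simp
  ultimately show ?thesis by linarith
qed

lemma xlnx_bound: assumes "\<bar>u::real\<bar> \<le> 1" shows "\<bar>u * ln \<bar>u\<bar>\<bar> \<le> 2 * sqrt \<bar>u\<bar>"
proof (cases "u = 0")
  case False
  hence p: "\<bar>u\<bar> > 0" by simp
  have l1: "ln \<bar>u\<bar> \<le> 0" using assms p by simp
  have l2: "ln \<bar>u\<bar> \<ge> -2 / sqrt \<bar>u\<bar>" using ln_lower[OF p] .
  have "\<bar>u * ln \<bar>u\<bar>\<bar> = \<bar>u\<bar> * (- ln \<bar>u\<bar>)" using l1 by (simp add: abs_mult)
  also have "\<dots> \<le> \<bar>u\<bar> * (2 / sqrt \<bar>u\<bar>)" using l2 p by (intro mult_left_mono) auto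
  also have "\<dots> = 2 * (\<bar>u\<bar> / sqrt \<bar>u\<bar>)" by simp
  also have "\<dots> = 2 * sqrt \<bar>u\<bar>" by (subst real_div_sqrt) auto
  finally show ?thesis .
qed simp

lemma xlnx_cont0: "isCont (\<lambda>u::real. u * ln \<bar>u\<bar>) 0"
proof -
  have "((\<lambda>u::real. u * ln \<bar>u\<bar>) \<longlongrightarrow> 0) (at 0)"
  proof (rule Lim_null_comparison)
    show "\<forall>\<^sub>F u in at (0::real). norm (u * ln \<bar>u\<bar>) \<le> 2 * sqrt \<bar>u\<bar>"
      unfolding eventually_at by (rule exI[of _ 1]) (auto intro!: xlnx_bound)
    have "((\<lambda>u::real. 2 * sqrt \<bar>u\<bar>) \<longlongrightarrow> 2 * sqrt \<bar>0\<bar>) (at 0)"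
      by (intro tendsto_intros)
    thus "((\<lambda>u::real. 2 * sqrt \<bar>u\<bar>) \<longlongrightarrow> 0) (at 0)" by simp
  qed
  thus ?thesis unfolding isCont_def by simp
qed

lemma xlnx_cont: "isCont (\<lambda>x::real. (x - t) * ln \<bar>x - t\<bar>) x"
proof (cases "x = t")
  case True
  have "isCont (\<lambda>x::real. x - t) x" by (intro continuous_intros)
  moreover have "isCont (\<lambda>u::real. u * ln \<bar>u\<bar>) (x - t)" using True xlnx_cont0 by simp
  ultimately show ?thesis by (rule isCont_o2)
next
  case False
  thus ?thesis by (intro continuous_intros) auto
qed

lemma log_integrable:
  fixes t a b :: real assumes "0 < a" "a \<le> b" "0 < t"
  shows "(\<lambda>x. ln \<bar>x - t\<bar> / x^2) integrable_on {a..b}"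
proof -
  define \<Phi> where "\<Phi> x = (x - t) * ln \<bar>x - t\<bar> / (t * x) - ln x / t" for x
  have \<Phi>2: "\<Phi> = (\<lambda>x. (x - t) * ln ((x - t)^2) / (2 * t * x) - ln x / t)"
    unfolding \<Phi>_def by (auto simp: ln_sq_abs fun_eq_iff)
  have cont: "continuous_on {a..b} \<Phi>"
    unfolding \<Phi>_def using assms
    by (intro continuous_at_imp_continuous_on ballI continuous_intros xlnx_cont) auto
  have der: "(\<Phi> has_vector_derivative ln \<bar>x - t\<bar> / x^2) (at x)" if "x \<in> {a<..<b} - {t}" for x
  proof -
    have x: "x > 0" "x \<noteq> t" using that assms by auto
    have sq: "(x - t)^2 > 0" using x by auto
    have "(\<Phi> has_real_derivative ln \<bar>x - t\<bar> / x^2) (at x)"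
    proof -
      have d1: "((\<lambda>x. ln ((x - t)^2)) has_real_derivative 2 / (x - t)) (at x)"
        by (rule derivative_eq_intros refl | use sq x in \<open>simp add: power2_eq_square field_simps\<close>)+
      have d2: "((\<lambda>x. (x - t) / (2 * t * x)) has_real_derivative 1 / (2 * x^2)) (at x)"
        by (rule derivative_eq_intros refl | use x assms in \<open>simp add: power2_eq_square field_simps\<close>)+
      have d3: "((\<lambda>x. ln x / t) has_real_derivative 1 / x / t) (at x)"
        by (rule derivative_eq_intros refl | use x assms in \<open>simp add: power2_eq_square field_simps\<close>)+
      have "((\<lambda>x. (x - t) / (2 * t * x) * ln ((x - t)^2) - ln x / t) has_real_derivative
          (1 / (2 * x^2) * ln ((x - t)^2) + 2 / (x - t) * ((x - t) / (2 * t * x)) - 1 / x / t)) (at x)"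
        by (intro DERIV_diff DERIV_mult d1 d2 d3)
      moreover have "(1 / (2 * x^2) * ln ((x - t)^2) + 2 / (x - t) * ((x - t) / (2 * t * x)) - 1 / x / t)
          = ln \<bar>x - t\<bar> / x^2"
        using x assms by (simp add: ln_sq_abs field_simps)
      moreover have "(\<lambda>x. (x - t) / (2 * t * x) * ln ((x - t)^2) - ln x / t) = \<Phi>"
        unfolding \<Phi>2 by (auto simp: fun_eq_iff)
      ultimately show ?thesis by simp
    qed
    thus ?thesis by (simp add: has_real_derivative_iff_has_vector_derivative)
  qed
  have "((\<lambda>x. ln \<bar>x - t\<bar> / x^2) has_integral (\<Phi> b - \<Phi> a)) {a..b}"
    by (rule fundamental_theorem_of_calculus_interior_strong[of "{t}"]) (use assms der cont in auto)
  thus ?thesis by blast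
qed

lemma blaschke_mod:
  fixes w d :: complex and R :: real
  assumes "Im d = 0" "cmod w = R"
  shows "cmod (of_real (R^2) - d * w) = R * cmod (w - d)"
proof -
  have "of_real (R^2) = w * cnj w" using complex_norm_square[of w] assms(2) by simp
  moreover have "cnj d = d" using assms(1) by (simp add: complex_eq_iff)
  ultimately have "of_real (R^2) - d * w = w * cnj (w - d)" by (simp add: algebra_simps)
  hence "cmod (of_real (R^2) - d * w) = cmod w * cmod (cnj (w - d))" by (simp only: norm_mult)
  also have "\<dots> = R * cmod (w - d)" by (simp only: complex_mod_cnj assms(2))
  finally show ?thesis .
qed

lemma finite_real_zeros:
  fixes F :: "complex \<Rightarrow> complex"
  assumes "F holomorphic_on UNIV" "\<exists>z. F z \<noteq> 0"
  shows "finite {x. a \<le> x \<and> x \<le> b \<and> F (complex_of_real x) = 0}"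
proof -
  define K where "K = complex_of_real ` {a..b}"
  have fin: "finite {z\<in>K. F z = 0}"
  proof (cases "F constant_on UNIV")
    case True
    then obtain c where "\<And>z. F z = c" unfolding constant_on_def by auto
    with assms(2) have "{z\<in>K. F z = 0} = {}" by auto
    thus ?thesis by (metis finite.emptyI)
  next
    case False
    have "compact K" unfolding K_def by (intro compact_continuous_image continuous_intros) auto
    thus ?thesis by (intro holomorphic_compact_finite_zeros[OF assms(1)] False) auto
  qed
  have "complex_of_real ` {x. a \<le> x \<and> x \<le> b \<and> F (complex_of_real x) = 0} \<subseteq> {z\<in>K. F z = 0}"
    unfolding K_def by auto
  hence "finite (complex_of_real ` {x. a \<le> x \<and> x \<le> b \<and> F (complex_of_real x) = 0})"
    using fin finite_subset by blast
  thus ?thesis by (rule finite_imageD) (auto simp: inj_on_def)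
qed

theorem lemma3p5:
  fixes \<Psi> \<sigma> :: "real \<Rightarrow> real" and F :: "complex \<Rightarrow> complex" and a b :: real and n :: nat
  assumes Psi_mono: "mono_on {0<..} \<Psi>"
    and sigma_mono: "mono_on {0<..} \<sigma>"
    and sigma_inf: "filterlim \<sigma> at_top at_top"
    and sigma_Psi: "\<And>x. x > 0 \<Longrightarrow> \<sigma> x \<le> 1 / (2 * exp 1) * \<Psi> (x / (2 * exp 1))"
    and entire: "F holomorphic_on UNIV"
    and growth: "\<And>x y. norm (F (Complex x y)) \<le> exp (\<bar>y\<bar> * \<sigma> \<bar>y\<bar>)"
    and nonzero: "\<exists>z. F z \<noteq> 0"
    and ab: "0 < a" "a < b"
    and zeros: "real_zero_count F a b = n"
    and n_ge: "real n \<ge> (b - a) * \<Psi> (b - a)"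
  shows "integral {a..b} (\<lambda>x. ln (norm (F (complex_of_real x))) / x\<^sup>2)
           \<le> - ln 2 * ((b - a) / b)\<^sup>2 * \<Psi> (b - a)"
proof -
  define f where "f x = ln (norm (F (complex_of_real x))) / x\<^sup>2" for x
  define Zr where "Zr = {x. a \<le> x \<and> x \<le> b \<and> F (complex_of_real x) = 0}"
  define Zc where "Zc = complex_of_real ` Zr"
  define m where "m c = nat (zorder F c)" for c
  define N where "N = (\<Sum>c\<in>Zc. m c)"
  have finZr: "finite Zr" unfolding Zr_def by (rule finite_real_zeros[OF entire nonzero])
  have finZc: "finite Zc" unfolding Zc_def using finZr by simp
  have injZ: "inj_on complex_of_real Zr" by (auto simp: inj_on_def)
  obtain G where G: "G holomorphic_on UNIV" "\<And>w. F w = (\<Prod>c\<in>Zc. (w - c) ^ m c) * G w"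
      "\<And>c. c \<in> Zc \<Longrightarrow> G c \<noteq> 0"
    using factor_finite[OF finZc entire nonzero] unfolding m_def by blast
  have Gnz: "G (complex_of_real x) \<noteq> 0" if "x \<in> {a..b}" for x
  proof (cases "F (complex_of_real x) = 0")
    case True
    hence "complex_of_real x \<in> Zc" using that unfolding Zc_def Zr_def by auto
    thus ?thesis using G(3) by blast
  next
    case False
    thus ?thesis using G(2)[of "complex_of_real x"] by auto
  qed
  have nN: "real n \<le> real N"
  proof -
    have "n = (\<Sum>x\<in>{x. a < x \<and> x < b \<and> F (complex_of_real x) = 0}. m (complex_of_real x))"
      using zeros unfolding real_zero_count_def m_def by simp
    also have "\<dots> \<le> (\<Sum>x\<in>Zr. m (complex_of_real x))"
      by (rule sum_mono2[OF finZr]) (auto simp: Zr_def)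
    also have "\<dots> = N" unfolding N_def Zc_def by (simp add: sum.reindex[OF injZ])
    finally show ?thesis by simp
  qed
  have Fle1: "norm (F (complex_of_real x)) \<le> 1" for x
    using growth[of x 0] by (simp add: complex_of_real_def)
  have lnle0: "ln (norm (F (complex_of_real x))) \<le> 0" for x
    using Fle1[of x] by (cases "norm (F (complex_of_real x)) = 0") auto
  have fint: "f integrable_on {a..b}"
  proof -
    define h where "h x = (\<Sum>t\<in>Zr. real (m (complex_of_real t)) * (ln \<bar>x - t\<bar> / x\<^sup>2))
        + ln (norm (G (complex_of_real x))) / x\<^sup>2" for x
    have decomp: "f x = h x" if x: "x \<in> {a..b} - Zr" for x
    proof -
      have ne: "x \<noteq> t" if "t \<in> Zr" for t using x that by auto
      have "norm (F (complex_of_real x)) =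
          (\<Prod>c\<in>Zc. norm (complex_of_real x - c) ^ m c) * norm (G (complex_of_real x))"
        by (simp add: G(2)[of "complex_of_real x"] norm_mult prod_norm[symmetric] norm_power)
      also have "(\<Prod>c\<in>Zc. norm (complex_of_real x - c) ^ m c) = (\<Prod>t\<in>Zr. \<bar>x - t\<bar> ^ m (complex_of_real t))"
        unfolding Zc_def by (simp add: prod.reindex[OF injZ] flip: of_real_diff)
      finally have eq: "norm (F (complex_of_real x)) = (\<Prod>t\<in>Zr. \<bar>x - t\<bar> ^ m (complex_of_real t)) * norm (G (complex_of_real x))" .
      have Gp: "norm (G (complex_of_real x)) > 0" using Gnz[of x] x by auto
      have Pp: "(\<Prod>t\<in>Zr. \<bar>x - t\<bar> ^ m (complex_of_real t)) > 0"
        using ne by (intro prod_pos) auto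
      have "ln (norm (F (complex_of_real x))) = ln (\<Prod>t\<in>Zr. \<bar>x - t\<bar> ^ m (complex_of_real t)) + ln (norm (G (complex_of_real x)))"
        unfolding eq using Gp Pp by (simp add: ln_mult)
      also have "ln (\<Prod>t\<in>Zr. \<bar>x - t\<bar> ^ m (complex_of_real t)) = (\<Sum>t\<in>Zr. ln (\<bar>x - t\<bar> ^ m (complex_of_real t)))"
        using ne by (intro ln_prod finZr) auto
      also have "\<dots> = (\<Sum>t\<in>Zr. real (m (complex_of_real t)) * ln \<bar>x - t\<bar>)"
        using ne by (intro sum.cong refl) (auto simp: ln_realpow)
      finally show ?thesis unfolding f_def h_def by (simp add: add_divide_distrib sum_divide_distrib)
    qed
    have hint: "h integrable_on {a..b}"
      unfolding h_def
    proof (intro integrable_add integrable_sum finZr)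
      fix t assume t: "t \<in> Zr"
      hence "t > 0" using ab by (auto simp: Zr_def)
      hence li: "(\<lambda>x. ln \<bar>x - t\<bar> / x\<^sup>2) integrable_on {a..b}"
        using ab by (intro log_integrable) auto
      show "(\<lambda>x. real (m (complex_of_real t)) * (ln \<bar>x - t\<bar> / x\<^sup>2)) integrable_on {a..b}"
        using integrable_cmul[OF li, of "real (m (complex_of_real t))"] by (simp only: real_scaleR_def)
    next
      have contG: "continuous_on UNIV G" using G(1) holomorphic_on_imp_continuous_on by blast
      have "continuous_on {a..b} (\<lambda>x. ln (norm (G (complex_of_real x))) / x\<^sup>2)"
        using ab Gnz
        by (intro continuous_intros continuous_on_compose2[OF contG]) auto
      thus "(\<lambda>x. ln (norm (G (complex_of_real x))) / x\<^sup>2) integrable_on {a..b}"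
        by (rule integrable_continuous_interval)
    qed
    show ?thesis by (rule integrable_spike_finite[OF finZr _ hint]) (use decomp in auto)
  qed
  show ?thesis
  proof (cases "\<Psi> (b - a) \<le> 0")
    case True
    have "integral {a..b} f \<le> integral {a..b} (\<lambda>x. 0::real)"
      by (rule integral_le[OF fint]) (use lnle0 in \<open>auto simp: f_def intro!: divide_nonpos_nonneg\<close>)
    also have "\<dots> = 0" by simp
    also have "0 \<le> - ln 2 * ((b - a) / b)\<^sup>2 * \<Psi> (b - a)"
      using True by (intro mult_nonpos_nonpos) auto
    finally show ?thesis unfolding f_def .
  next
    case False
    hence Psi_pos: "\<Psi> (b - a) > 0" by simp
    define C where "C = ln 2 * ((b - a) * \<Psi> (b - a))"
    have Cpos: "C > 0" unfolding C_def using Psi_pos ab by (intro mult_pos_pos) auto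
    have pw: "ln (norm (F (complex_of_real x))) \<le> - C"
      if x: "x \<in> {a..b}" "F (complex_of_real x) \<noteq> 0" for x
    proof -
      define xc where "xc = complex_of_real x"
      define R where "R = 2 * exp 1 * (b - a)"
      define M where "M = exp ((b - a) * \<Psi> (b - a))"
      define Q where "Q z = (\<Prod>c\<in>Zc. ((of_real (R^2) - (c - xc) * (z - xc)) / of_real R) ^ m c)" for z
      define H where "H z = G z * Q z" for z
      have Rpos: "R > 0" unfolding R_def using ab by auto
      have Zc_real: "Im c = 0" if "c \<in> Zc" for c using that unfolding Zc_def by auto
      have holH: "H holomorphic_on UNIV"
        unfolding H_def Q_def using Rpos by (intro holomorphic_intros G(1)) auto
      have sphere_bound: "norm (H z) \<le> M" if z: "z \<in> sphere xc R" for z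
      proof -
        have w: "cmod (z - xc) = R" using z by (simp add: dist_norm norm_minus_commute)
        have "norm (Q z) = (\<Prod>c\<in>Zc. norm ((of_real (R^2) - (c - xc) * (z - xc)) / of_real R) ^ m c)"
          unfolding Q_def by (simp add: prod_norm[symmetric] norm_power)
        also have "\<dots> = (\<Prod>c\<in>Zc. norm (z - c) ^ m c)"
        proof (intro prod.cong refl)
          fix c assume c: "c \<in> Zc"
          have "Im (c - xc) = 0" using Zc_real[OF c] by (simp add: xc_def)
          from blaschke_mod[OF this w]
          have "cmod (of_real (R^2) - (c - xc) * (z - xc)) = R * cmod (z - c)" by simp
          thus "norm ((of_real (R^2) - (c - xc) * (z - xc)) / of_real R) ^ m c = norm (z - c) ^ m c"
            using Rpos by (simp add: norm_divide)
        qed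
        finally have "norm (H z) = norm (F z)"
          unfolding H_def by (simp add: G(2)[of z] norm_mult prod_norm[symmetric] norm_power)
        also have "norm (F z) \<le> exp (\<bar>Im z\<bar> * \<sigma> \<bar>Im z\<bar>)"
          using growth[of "Re z" "Im z"] by (simp add: complex_surj)
        also have "\<dots> \<le> M" unfolding M_def
        proof (subst exp_le_cancel_iff)
          have Iy: "\<bar>Im z\<bar> \<le> R"
            using abs_Im_le_cmod[of "z - xc"] w by (simp add: xc_def)
          show "\<bar>Im z\<bar> * \<sigma> \<bar>Im z\<bar> \<le> (b - a) * \<Psi> (b - a)"
          proof (cases "Im z = 0")
            case True thus ?thesis using Psi_pos ab by simp
          next
            case False
            have "\<sigma> \<bar>Im z\<bar> \<le> \<sigma> R"
              using False Iy Rpos by (intro mono_onD[OF sigma_mono]) auto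
            also have "\<sigma> R \<le> 1 / (2 * exp 1) * \<Psi> (R / (2 * exp 1))" by (rule sigma_Psi[OF Rpos])
            also have "R / (2 * exp 1) = b - a" unfolding R_def by simp
            finally have s1: "\<sigma> \<bar>Im z\<bar> \<le> 1 / (2 * exp 1) * \<Psi> (b - a)" .
            have "\<bar>Im z\<bar> * \<sigma> \<bar>Im z\<bar> \<le> \<bar>Im z\<bar> * (1 / (2 * exp 1) * \<Psi> (b - a))"
              by (intro mult_left_mono s1) auto
            also have "\<dots> \<le> R * (1 / (2 * exp 1) * \<Psi> (b - a))"
              using Iy Psi_pos by (intro mult_right_mono) auto
            also have "\<dots> = (b - a) * \<Psi> (b - a)" unfolding R_def by simp
            finally show ?thesis .
          qed
        qed
        finally show ?thesis .
      qed
      have HxM: "norm (H xc) \<le> M"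
      proof (rule maximum_modulus_frontier[of H "cball xc R"])
        show "H holomorphic_on interior (cball xc R)" using holH by (rule holomorphic_on_subset) auto
        show "continuous_on (closure (cball xc R)) H"
          using holomorphic_on_imp_continuous_on[OF holH] by (rule continuous_on_subset) auto
      qed (use sphere_bound Rpos in auto)
      have Hxc: "H xc = G xc * of_real R ^ N"
      proof -
        have "Q xc = (\<Prod>c\<in>Zc. of_real R ^ m c)"
          unfolding Q_def using Rpos by (intro prod.cong refl) (simp add: power2_eq_square)
        also have "\<dots> = of_real R ^ N" unfolding N_def by (simp add: power_sum)
        finally show ?thesis unfolding H_def by simp
      qed
      have Pbound: "norm (\<Prod>c\<in>Zc. (xc - c) ^ m c) \<le> (b - a) ^ N"
      proof -
        have "norm (\<Prod>c\<in>Zc. (xc - c) ^ m c) = (\<Prod>c\<in>Zc. norm (xc - c) ^ m c)"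
          by (simp add: prod_norm[symmetric] norm_power)
        also have "\<dots> \<le> (\<Prod>c\<in>Zc. (b - a) ^ m c)"
        proof (intro prod_mono conjI)
          fix c assume c: "c \<in> Zc"
          then obtain t where t: "t \<in> Zr" "c = complex_of_real t" unfolding Zc_def by auto
          have "norm (xc - c) = \<bar>x - t\<bar>" unfolding xc_def t(2) by (simp flip: of_real_diff)
          also have "\<dots> \<le> b - a" using t(1) x(1) by (auto simp: Zr_def)
          finally show "norm (xc - c) ^ m c \<le> (b - a) ^ m c" by (intro power_mono) auto
        qed auto
        also have "\<dots> = (b - a) ^ N" unfolding N_def by (simp add: power_sum)
        finally show ?thesis .
      qed
      have key: "norm (F xc) * R ^ N \<le> (b - a) ^ N * M"
      proof -
        have "norm (F xc) * R ^ N = norm (\<Prod>c\<in>Zc. (xc - c) ^ m c) * norm (H xc)"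
          unfolding G(2)[of xc] Hxc using Rpos by (simp add: norm_mult norm_power)
        also have "\<dots> \<le> (b - a) ^ N * M"
          using Pbound HxM ab by (intro mult_mono) auto
        finally show ?thesis .
      qed
      have Fpos: "norm (F xc) > 0" using x(2) by (simp add: xc_def)
      have "ln (norm (F xc) * R ^ N) \<le> ln ((b - a) ^ N * M)"
        using key Fpos Rpos ab by (subst ln_le_cancel_iff) (auto simp: M_def)
      hence "ln (norm (F xc)) + N * ln R \<le> N * ln (b - a) + (b - a) * \<Psi> (b - a)"
        using Fpos Rpos ab by (simp add: ln_mult ln_realpow M_def)
      moreover have "ln R = ln 2 + 1 + ln (b - a)"
        unfolding R_def using ab by (simp add: ln_mult)
      ultimately have "ln (norm (F xc)) \<le> (b - a) * \<Psi> (b - a) - N - N * ln 2"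
        by (simp add: algebra_simps)
      also have "\<dots> \<le> - N * ln 2" using nN n_ge by simp
      also have "\<dots> \<le> - C" unfolding C_def
        using nN n_ge by (simp add: mult.commute)
      finally show ?thesis unfolding xc_def .
    qed
    define f2 where "f2 x = (if F (complex_of_real x) = 0 then - C / x\<^sup>2 else f x)" for x
    have f2int: "(f2 has_integral integral {a..b} f) {a..b}"
      by (rule has_integral_spike_finite[OF finZr _ integrable_integral[OF fint]]) (auto simp: f2_def Zr_def)
    have gint: "((\<lambda>x. - C / x\<^sup>2) has_integral (C / b - C / a)) {a..b}"
    proof -
      have "((\<lambda>x. - C / x\<^sup>2) has_integral ((\<lambda>x. C / x) b - (\<lambda>x. C / x) a)) {a..b}"
      proof (rule fundamental_theorem_of_calculus)
        show "a \<le> b" using ab by simp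
        fix x assume x: "x \<in> {a..b}"
        hence "x > 0" using ab by auto
        hence "((\<lambda>x. C / x) has_real_derivative - C / x\<^sup>2) (at x within {a..b})"
          by (auto intro!: derivative_eq_intros simp: power2_eq_square field_simps)
        thus "((\<lambda>x. C / x) has_vector_derivative - C / x\<^sup>2) (at x within {a..b})"
          by (simp add: has_real_derivative_iff_has_vector_derivative)
      qed
      thus ?thesis by simp
    qed
    have "integral {a..b} f \<le> C / b - C / a"
    proof (rule has_integral_le[OF f2int gint])
      fix x assume x: "x \<in> {a..b}"
      hence xp: "x\<^sup>2 > 0" using ab by auto
      show "f2 x \<le> - C / x\<^sup>2"
      proof (cases "F (complex_of_real x) = 0")
        case False
        have "ln (norm (F (complex_of_real x))) / x\<^sup>2 \<le> - C / x\<^sup>2"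
          using pw[OF x False] xp by (intro divide_right_mono) auto
        thus ?thesis using False by (simp add: f2_def f_def)
      qed (simp add: f2_def)
    qed
    also have "C / b - C / a \<le> - ln 2 * ((b - a) / b)\<^sup>2 * \<Psi> (b - a)"
    proof -
      have "C * (b - a) / b ^ 2 \<le> C * (b - a) / (a * b)"
        using ab Cpos by (intro divide_left_mono mult_nonneg_nonneg mult_pos_pos) (auto simp: power2_eq_square)
      moreover have "C / b - C / a = - (C * (b - a) / (a * b))" using ab by (simp add: field_simps)
      moreover have "- ln 2 * ((b - a) / b)\<^sup>2 * \<Psi> (b - a) = - (C * (b - a) / b ^ 2)"
        unfolding C_def power_divide by (simp add: power2_eq_square mult_ac)
      ultimately show ?thesis by linarith
    qed
    finally show ?thesis unfolding f_def .
  qed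
qed

end
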